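(* Let $q,t,v$ be indeterminates (or complex numbers with $|v|<1$, $|t|<1$, in the region of convergence). Then the $1$-point function $$\widehat F(q,t):=\mathrm{Tr}\big(v^{L_0}\,\widehat{\mathfrak B}_{q,t}\big)$$ is given by $$\widehat F(q,t)=\frac{(vqt)_\infty}{(q)_\infty\,(t)_\infty}.$$
   Context: Notation: $(a)_\infty:=\prod_{i=0}^\infty(1-av^i)$. Let $\Lambda$ be the ring of symmetric functions over $\mathbb Q(q,t)$ and $\widetilde H_\lambda(x;q,t)$ the modified Macdonald polynomials of Garsia–Haiman. The operator $\widehat{\mathfrak B}_{q,t}$ on $\Lambda$ is the linear operator with $\widehat{\mathfrak B}_{q,t}\widetilde H_\lambda=\widehat B_\lambda(q,t)\widetilde H_\lambda$ for every partition $\lambda$, where $\widehat B_\lambda(q,t)=\frac1{1-q}\sum_{i\ge1}t^{i-1}q^{\lambda_i}$ (with $\lambda_i=0$ beyond the length of $\lambda$). The energy operator $L_0$ multiplies homogeneous symmetric functions of degree $m$ by $m$, and $\mathrm{Tr}(v^{L_0}\mathfrak f)=\sum_m v^m\,\mathrm{tr}(\mathfrak f|_{\Lambda^m})$. *)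

theory Defs
  imports "HOL-Analysis.Analysis"
begin

definition partitions :: "nat \<Rightarrow> nat list set" where
  "partitions m = {xs. sorted_wrt (\<ge>) xs \<and> 0 \<notin> set xs \<and> sum_list xs = m}"

definition part :: "nat list \<Rightarrow> nat \<Rightarrow> nat" where
  "part xs i = (if 1 \<le> i \<and> i \<le> length xs then xs ! (i - 1) else 0)"

definition Bhat :: "complex \<Rightarrow> complex \<Rightarrow> nat list \<Rightarrow> complex" where
  "Bhat q t xs = (1 / (1 - q)) * (\<Sum>j. t ^ j * q ^ part xs (Suc j))"

text \<open>Trace of hat B_{q,t} restricted to Lambda^m: the operator is diagonal in the
  basis (modified Macdonald polynomials H_lambda, lambda a partition of m) of Lambda^m,
  so its trace is the sum of its eigenvalues.\<close>
definition trace_B :: "complex \<Rightarrow> complex \<Rightarrow> nat \<Rightarrow> complex" where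
  "trace_B q t m = (\<Sum>xs\<in>partitions m. Bhat q t xs)"

definition qpoch_inf :: "complex \<Rightarrow> complex \<Rightarrow> complex" where
  "qpoch_inf v a = (\<Prod>i. (1 - a * v ^ i))"

end

theory Submission
  imports Defs
begin


definition PP :: "nat list set" where
  "PP = {xs. sorted_wrt (\<ge>) xs \<and> 0 \<notin> set xs}"

definition PN :: "nat \<Rightarrow> nat list set" where
  "PN N = {xs \<in> PP. length xs \<le> N}"

definition toD :: "nat \<Rightarrow> nat list \<Rightarrow> nat \<Rightarrow> nat" where
  "toD N xs = (\<lambda>k\<in>{..<N}. part xs (Suc k) - part xs (Suc (Suc k)))"

definition fromD :: "nat \<Rightarrow> (nat \<Rightarrow> nat) \<Rightarrow> nat list" where
  "fromD N d = takeWhile (\<lambda>x. 0 < x) (map (\<lambda>i. \<Sum>k\<in>{i..<N}. d k) [0..<N])"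

lemma part_zero: "length xs < i \<Longrightarrow> part xs i = 0"
  by (simp add: part_def)

lemma part_0: "part xs 0 = 0"
  by (simp add: part_def)

lemma part_mono:
  assumes "xs \<in> PP" "1 \<le> i" "i \<le> j"
  shows "part xs j \<le> part xs i"
proof (cases "j \<le> length xs")
  case True
  have s: "sorted_wrt (\<ge>) xs" using assms(1) by (simp add: PP_def)
  show ?thesis
  proof (cases "i = j")
    case False
    then have "i - 1 < j - 1" using assms by linarith
    moreover have "j - 1 < length xs" using True assms by linarith
    ultimately have "xs ! (j - 1) \<le> xs ! (i - 1)" using sorted_wrt_nth_less[OF s] by simp
    then show ?thesis using True assms by (simp add: part_def)
  qed simp
next
  case False
  then show ?thesis by (simp add: part_def)
qed

lemma part_pos:
  assumes "xs \<in> PP" "1 \<le> i" "i \<le> length xs"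
  shows "0 < part xs i"
proof -
  have "xs ! (i - 1) \<in> set xs" using assms by simp
  then have "xs ! (i - 1) \<noteq> 0" using assms(1) unfolding PP_def by (metis (mono_tags, lifting) mem_Collect_eq)
  then show ?thesis using assms by (simp add: part_def)
qed

lemma part_inj:
  assumes "xs \<in> PP" "ys \<in> PP" "\<And>i. part xs i = part ys i"
  shows "xs = ys"
proof -
  have len: "length xs = length ys"
  proof (rule ccontr)
    assume "length xs \<noteq> length ys"
    then consider "length xs < length ys" | "length ys < length xs" by linarith
    then show False
    proof cases
      case 1
      then have "0 < part ys (length ys)" using part_pos[OF assms(2)] by simp
      moreover have "part xs (length ys) = 0" using 1 part_zero by simp
      ultimately show False using assms(3) by simp
    next
      case 2
      then have "0 < part xs (length xs)" using part_pos[OF assms(1)] by simp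
      moreover have "part ys (length xs) = 0" using 2 part_zero by simp
      ultimately show False using assms(3) by simp
    qed
  qed
  show ?thesis
  proof (rule nth_equalityI[OF len])
    fix i assume "i < length xs"
    then show "xs ! i = ys ! i" using assms(3)[of "Suc i"] len by (simp add: part_def)
  qed
qed

lemma PN_telescope:
  assumes "xs \<in> PN N"
  shows "part xs (Suc i) = (\<Sum>k\<in>{i..<N}. toD N xs k)"
proof (induction "N - i" arbitrary: i)
  case 0
  then have "length xs < Suc i" using assms by (simp add: PN_def)
  then show ?case using 0 by (simp add: part_zero)
next
  case (Suc m)
  then have iN: "i < N" by simp
  have IH: "part xs (Suc (Suc i)) = (\<Sum>k\<in>{Suc i..<N}. toD N xs k)"
    using Suc(1)[of "Suc i"] Suc(2) by simp
  have xP: "xs \<in> PP" using assms by (simp add: PN_def)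
  have le: "part xs (Suc (Suc i)) \<le> part xs (Suc i)" by (rule part_mono[OF xP]) auto
  have "(\<Sum>k\<in>{i..<N}. toD N xs k) = toD N xs i + (\<Sum>k\<in>{Suc i..<N}. toD N xs k)"
    using iN by (simp add: sum.atLeast_Suc_lessThan)
  also have "\<dots> = part xs (Suc i)" using IH le iN by (simp add: toD_def)
  finally show ?case by simp
qed

lemma sum_triangle_aux:
  fixes g :: "nat \<Rightarrow> nat"
  shows "(\<Sum>i<N. \<Sum>k\<in>{i..<N}. g k) = (\<Sum>k<N. Suc k * g k)"
proof (induction N)
  case 0
  then show ?case by simp
next
  case (Suc N)
  have "(\<Sum>i<Suc N. \<Sum>k\<in>{i..<Suc N}. g k) = (\<Sum>i<N. \<Sum>k\<in>{i..<Suc N}. g k) + g N"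
    by simp
  also have "(\<Sum>i<N. \<Sum>k\<in>{i..<Suc N}. g k) = (\<Sum>i<N. (\<Sum>k\<in>{i..<N}. g k) + g N)"
    by (rule sum.cong) auto
  also have "\<dots> = (\<Sum>i<N. \<Sum>k\<in>{i..<N}. g k) + N * g N"
    by (simp add: sum.distrib)
  finally show ?case using Suc by simp
qed

lemma PN_sum_list:
  assumes "xs \<in> PN N"
  shows "sum_list xs = (\<Sum>k<N. Suc k * toD N xs k)"
proof -
  have len: "length xs \<le> N" using assms by (simp add: PN_def)
  have "sum_list xs = (\<Sum>i<length xs. xs ! i)"
    by (simp add: sum_list_sum_nth atLeast0LessThan)
  also have "\<dots> = (\<Sum>i<length xs. part xs (Suc i))"
    by (rule sum.cong) (auto simp: part_def)
  also have "\<dots> = (\<Sum>i<N. part xs (Suc i))"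
    using len by (intro sum.mono_neutral_left) (auto simp: part_zero)
  also have "\<dots> = (\<Sum>i<N. \<Sum>k\<in>{i..<N}. toD N xs k)"
    using PN_telescope[OF assms] by simp
  also have "\<dots> = (\<Sum>k<N. Suc k * toD N xs k)" by (rule sum_triangle_aux)
  finally show ?thesis .
qed

lemma PN_weight:
  fixes v q :: "'a :: comm_ring_1"
  assumes "xs \<in> PN N"
  shows "(\<Prod>k<N. (v ^ Suc k * (if j \<le> k then q else 1)) ^ toD N xs k)
         = v ^ sum_list xs * q ^ part xs (Suc j)"
proof -
  have "(\<Prod>k<N. (v ^ Suc k * (if j \<le> k then q else 1)) ^ toD N xs k)
      = (\<Prod>k<N. v ^ (Suc k * toD N xs k)) * (\<Prod>k<N. (if j \<le> k then q ^ toD N xs k else 1))"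
  proof -
    have "(v ^ Suc k * (if j \<le> k then q else 1)) ^ toD N xs k
          = v ^ (Suc k * toD N xs k) * (if j \<le> k then q ^ toD N xs k else 1)" for k
      by (cases "j \<le> k") (simp_all add: power_mult_distrib power_mult[symmetric] power_add)
    then show ?thesis by (simp add: prod.distrib)
  qed
  also have "(\<Prod>k<N. v ^ (Suc k * toD N xs k)) = v ^ sum_list xs"
    by (simp add: PN_sum_list[OF assms] power_sum)
  also have "(\<Prod>k<N. (if j \<le> k then q ^ toD N xs k else 1)) = (\<Prod>k\<in>{k\<in>{..<N}. j \<le> k}. q ^ toD N xs k)"
    by (rule prod.inter_filter[symmetric]) simp
  also have "{k\<in>{..<N}. j \<le> k} = {j..<N}" by auto
  also have "(\<Prod>k\<in>{j..<N}. q ^ toD N xs k) = q ^ part xs (Suc j)"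
    by (simp add: PN_telescope[OF assms] power_sum)
  finally show ?thesis .
qed


lemma fromD_part:
  "part (fromD N d) (Suc i) = (\<Sum>k\<in>{i..<N}. d k)"
proof -
  define g where "g = (\<lambda>i. \<Sum>k\<in>{i..<N}. d k)"
  define L where "L = map g [0..<N]"
  have fd: "fromD N d = takeWhile (\<lambda>x. 0 < x) L"
    by (simp add: fromD_def L_def g_def)
  define M where "M = length (takeWhile (\<lambda>x. 0 < x) L)"
  have lenL: "length L = N" by (simp add: L_def)
  have anti: "g b \<le> g a" if "a \<le> b" for a b
    unfolding g_def using that by (intro sum_mono2) auto
  show ?thesis
  proof (cases "i < M")
    case True
    then have "part (fromD N d) (Suc i) = L ! i"
      by (simp add: fd part_def M_def takeWhile_nth)
    also have "\<dots> = g i"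
    proof -
      have "i < N" using True length_takeWhile_le[of "\<lambda>x. 0 < x" L] lenL unfolding M_def by linarith
      then show ?thesis by (simp add: L_def)
    qed
    finally show ?thesis by (simp add: g_def)
  next
    case False
    then have "part (fromD N d) (Suc i) = 0"
      by (simp add: fd part_def M_def)
    moreover have "g i = 0"
    proof (cases "i < N")
      case True
      then have "M < length L" using False lenL by simp
      then have "\<not> 0 < L ! M" using nth_length_takeWhile[of "\<lambda>x. 0 < x" L] by (simp add: M_def)
      then have "g M = 0" using \<open>M < length L\<close> lenL by (simp add: L_def)
      then show ?thesis using anti[of M i] False by simp
    next
      case False
      then show ?thesis by (simp add: g_def)
    qed
    ultimately show ?thesis by (simp add: g_def)
  qed
qed

lemma fromD_PN: "fromD N d \<in> PN N"
proof -
  define g where "g = (\<lambda>i. \<Sum>k\<in>{i..<N}. d k)"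
  define L where "L = map g [0..<N]"
  have fd: "fromD N d = takeWhile (\<lambda>x. 0 < x) L"
    by (simp add: fromD_def L_def g_def)
  have anti: "g b \<le> g a" if "a \<le> b" for a b
    unfolding g_def using that by (intro sum_mono2) auto
  have sL: "sorted_wrt (\<ge>) L"
    unfolding sorted_wrt_iff_nth_less L_def by (auto intro: anti)
  have "sorted_wrt (\<ge>) (takeWhile (\<lambda>x. 0 < x) L)"
    by (subst takeWhile_eq_take) (rule sorted_wrt_take[OF sL])
  moreover have "0 \<notin> set (takeWhile (\<lambda>x. 0 < x) L)"
    by (metis less_irrefl set_takeWhileD)
  moreover have "length (takeWhile (\<lambda>x. 0 < x) L) \<le> N"
    using length_takeWhile_le[of _ L] by (simp add: L_def)
  ultimately show ?thesis by (simp add: PN_def PP_def fd)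
qed

lemma toD_PiE: "toD N xs \<in> PiE {..<N} (\<lambda>_. UNIV)"
  by (simp add: toD_def)

lemma toD_fromD:
  assumes "d \<in> PiE {..<N} (\<lambda>_. UNIV)"
  shows "toD N (fromD N d) = d"
proof
  fix k
  show "toD N (fromD N d) k = d k"
  proof (cases "k < N")
    case True
    have 1: "toD N (fromD N d) k = part (fromD N d) (Suc k) - part (fromD N d) (Suc (Suc k))"
      using True unfolding toD_def by simp
    have 2: "part (fromD N d) (Suc k) = d k + (\<Sum>j\<in>{Suc k..<N}. d j)"
      unfolding fromD_part using True by (rule sum.atLeast_Suc_lessThan)
    have 3: "part (fromD N d) (Suc (Suc k)) = (\<Sum>j\<in>{Suc k..<N}. d j)"
      by (rule fromD_part)
    show ?thesis unfolding 1 2 3 by simp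
  next
    case False
    then show ?thesis using PiE_arb[OF assms, of k] unfolding toD_def by simp
  qed
qed

lemma fromD_toD:
  assumes "xs \<in> PN N"
  shows "fromD N (toD N xs) = xs"
proof (rule part_inj)
  show "fromD N (toD N xs) \<in> PP" using fromD_PN by (simp add: PN_def)
  show "xs \<in> PP" using assms by (simp add: PN_def)
  fix i show "part (fromD N (toD N xs)) i = part xs i"
    by (cases i) (simp_all add: part_0 fromD_part PN_telescope[OF assms])
qed

lemma geom_has_sum:
  fixes z :: "'a::{real_normed_field,banach}"
  assumes "norm z < 1"
  shows "((\<lambda>n. z ^ n) has_sum (1 / (1 - z))) UNIV"
proof -
  have "((\<lambda>n. norm z ^ n) has_sum (1 / (1 - norm z))) UNIV"
    by (rule sums_nonneg_imp_has_sum) (use geometric_sums[of "norm z"] assms in auto)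
  then have "(\<lambda>n. z ^ n) abs_summable_on UNIV"
    by (auto simp add: norm_power summable_on_def)
  then have "(\<lambda>n. z ^ n) summable_on UNIV" by (rule abs_summable_summable)
  then obtain S where S: "((\<lambda>n. z ^ n) has_sum S) UNIV" by (auto simp: summable_on_def)
  then have "(\<lambda>n. z ^ n) sums S" by (rule has_sum_imp_sums)
  moreover have "(\<lambda>n. z ^ n) sums (1 / (1 - z))" using geometric_sums[OF assms] by simp
  ultimately have "S = 1 / (1 - z)" using sums_unique2 by blast
  then show ?thesis using S by simp
qed

lemma prodgeom_summable_real:
  fixes z :: "nat \<Rightarrow> real"
  assumes fin: "finite A" and nn: "\<And>k. k \<in> A \<Longrightarrow> 0 \<le> z k" and lt: "\<And>k. k \<in> A \<Longrightarrow> z k < 1"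
  shows "(\<lambda>d. \<Prod>k\<in>A. z k ^ d k) summable_on PiE A (\<lambda>_. UNIV)"
proof (rule nonneg_bdd_above_summable_on)
  show "0 \<le> (\<Prod>k\<in>A. z k ^ d k)" for d by (intro prod_nonneg) (simp add: nn)
  show "bdd_above (sum (\<lambda>d. \<Prod>k\<in>A. z k ^ d k) ` {F. F \<subseteq> PiE A (\<lambda>_. UNIV) \<and> finite F})"
  proof (rule bdd_aboveI2)
    fix F :: "(nat \<Rightarrow> nat) set" assume F: "F \<in> {F. F \<subseteq> PiE A (\<lambda>_. UNIV) \<and> finite F}"
    define M where "M = Max ((\<lambda>(p::nat\<Rightarrow>nat, k). p k) ` (F \<times> A))"
    have Mge: "p k \<le> M" if "p \<in> F" "k \<in> A" for p k
      unfolding M_def using F fin that by (intro Max_ge) auto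
    have sub: "F \<subseteq> PiE A (\<lambda>_. {..M})"
      using F Mge by (auto simp: PiE_iff)
    have "(\<Sum>d\<in>F. \<Prod>k\<in>A. z k ^ d k) \<le> (\<Sum>d\<in>PiE A (\<lambda>_. {..M}). \<Prod>k\<in>A. z k ^ d k)"
      using sub fin by (intro sum_mono2 finite_PiE) (auto intro!: prod_nonneg simp: nn)
    also have "\<dots> = (\<Prod>k\<in>A. \<Sum>y\<in>{..M}. z k ^ y)"
      using fin by (subst prod_sum_PiE) auto
    also have "\<dots> \<le> (\<Prod>k\<in>A. 1 / (1 - z k))"
    proof (intro prod_mono conjI)
      fix k assume k: "k \<in> A"
      show "0 \<le> (\<Sum>y\<in>{..M}. z k ^ y)" using nn[OF k] by (intro sum_nonneg) simp
      have "(\<Sum>y\<in>{..<Suc M}. z k ^ y) \<le> (\<Sum>y. z k ^ y)"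
        using nn[OF k] lt[OF k] by (intro sum_le_suminf summable_geometric) auto
      also have "\<dots> = 1 / (1 - z k)"
        using nn[OF k] lt[OF k] by (subst suminf_geometric) auto
      finally show "(\<Sum>y\<in>{..M}. z k ^ y) \<le> 1 / (1 - z k)" by (simp add: lessThan_Suc_atMost)
    qed
    finally show "(\<Sum>d\<in>F. \<Prod>k\<in>A. z k ^ d k) \<le> (\<Prod>k\<in>A. 1 / (1 - z k))" .
  qed
qed

lemma prodgeom_has_sum:
  fixes z :: "nat \<Rightarrow> 'a::{real_normed_field,banach}"
  assumes fin: "finite A" and lt: "\<And>k. k \<in> A \<Longrightarrow> norm (z k) < 1"
  shows "((\<lambda>d. \<Prod>k\<in>A. z k ^ d k) has_sum (\<Prod>k\<in>A. 1 / (1 - z k))) (PiE A (\<lambda>_. UNIV))"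
proof -
  have "(\<lambda>d. \<Prod>k\<in>A. norm (z k) ^ d k) summable_on PiE A (\<lambda>_. UNIV)"
    by (rule prodgeom_summable_real[OF fin]) (auto simp: lt)
  moreover have "(\<lambda>d. norm (\<Prod>k\<in>A. z k ^ d k)) = (\<lambda>d. \<Prod>k\<in>A. norm (z k) ^ d k)"
    by (simp add: prod_norm[symmetric] norm_power)
  ultimately have "(\<lambda>d. \<Prod>k\<in>A. z k ^ d k) abs_summable_on PiE A (\<lambda>_. UNIV)"
    by simp
  then have S: "(\<lambda>d. \<Prod>k\<in>A. z k ^ d k) summable_on PiE A (\<lambda>_. UNIV)"
    by (rule abs_summable_summable)
  have "infsum (\<lambda>d. \<Prod>k\<in>A. z k ^ d k) (PiE A (\<lambda>_. UNIV)) = (\<Prod>k\<in>A. infsum (\<lambda>n. z k ^ n) UNIV)"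
    by (rule infsum_prod_PiE[OF fin _ S]) (use geom_has_sum lt in \<open>auto simp: summable_on_def\<close>)
  also have "\<dots> = (\<Prod>k\<in>A. 1 / (1 - z k))"
    by (intro prod.cong refl infsumI geom_has_sum lt)
  finally show ?thesis using S by (metis has_sum_infsum)
qed

lemma PN_has_sum:
  fixes z :: "nat \<Rightarrow> 'a::{real_normed_field,banach}"
  assumes lt: "\<And>k. k < N \<Longrightarrow> norm (z k) < 1"
  shows "((\<lambda>xs. \<Prod>k<N. z k ^ toD N xs k) has_sum (\<Prod>k<N. 1 / (1 - z k))) (PN N)"
proof -
  have "((\<lambda>d. \<Prod>k<N. z k ^ d k) has_sum (\<Prod>k<N. 1 / (1 - z k))) (PiE {..<N} (\<lambda>_. UNIV))"
    by (rule prodgeom_has_sum) (auto simp: lt)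
  moreover have "((\<lambda>xs. \<Prod>k<N. z k ^ toD N xs k) has_sum (\<Prod>k<N. 1 / (1 - z k))) (PN N)
     = ((\<lambda>d. \<Prod>k<N. z k ^ d k) has_sum (\<Prod>k<N. 1 / (1 - z k))) (PiE {..<N} (\<lambda>_. UNIV))"
    by (rule has_sum_reindex_bij_witness[where i = "fromD N" and j = "toD N"])
       (auto simp: fromD_toD toD_fromD toD_PiE fromD_PN)
  ultimately show ?thesis by simp
qed

lemma PN_has_sum_w:
  fixes v q :: "'a::{real_normed_field,banach}"
  assumes lt: "\<And>k. k < N \<Longrightarrow> norm (v ^ Suc k * (if j \<le> k then q else 1)) < 1"
  shows "((\<lambda>xs. v ^ sum_list xs * q ^ part xs (Suc j)) has_sum
           (\<Prod>k<N. 1 / (1 - v ^ Suc k * (if j \<le> k then q else 1)))) (PN N)"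
proof -
  have "((\<lambda>xs. \<Prod>k<N. (v ^ Suc k * (if j \<le> k then q else 1)) ^ toD N xs k) has_sum
           (\<Prod>k<N. 1 / (1 - v ^ Suc k * (if j \<le> k then q else 1)))) (PN N)"
    by (rule PN_has_sum) (use lt in auto)
  then show ?thesis
    by (rule has_sum_cong[THEN iffD1, rotated]) (rule PN_weight, assumption)
qed

lemma qp_conv:
  fixes v a :: complex
  assumes "norm v < 1"
  shows "convergent_prod (\<lambda>i. 1 - a * v ^ i)"
proof -
  have "summable (\<lambda>i. norm a * norm v ^ i)"
    using assms by (intro summable_mult summable_geometric) simp
  then have "summable (\<lambda>i. norm ((1 - a * v ^ i) - 1))"
    by (simp add: norm_mult norm_power)
  then have "abs_convergent_prod (\<lambda>i. 1 - a * v ^ i)"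
    by (rule summable_imp_abs_convergent_prod)
  then show ?thesis by (rule abs_convergent_prod_imp_convergent_prod)
qed

lemma qp_lim:
  fixes v a :: complex
  assumes "norm v < 1"
  shows "(\<lambda>n. \<Prod>i<n. 1 - a * v ^ i) \<longlonglongrightarrow> qpoch_inf v a"
  unfolding qpoch_inf_def
  using convergent_prod_LIMSEQ[OF qp_conv[OF assms]]
  by (subst LIMSEQ_lessThan_iff_atMost[where f = "\<lambda>A. \<Prod>i\<in>A. 1 - a * v ^ i"]) simp

lemma qp_nz:
  fixes v a :: complex
  assumes "norm v < 1" "\<And>i. a * v ^ i \<noteq> 1"
  shows "qpoch_inf v a \<noteq> 0"
  unfolding qpoch_inf_def
  using assms by (intro prodinf_nonzero qp_conv) auto

lemma qp_head:
  fixes v a :: complex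
  assumes "norm v < 1" "a \<noteq> 1"
  shows "qpoch_inf v a = (1 - a) * qpoch_inf v (a * v)"
proof -
  have "(\<Prod>n. 1 - a * v ^ Suc n) = qpoch_inf v a / (1 - a)"
    unfolding qpoch_inf_def
    using prodinf_split_head[OF qp_conv[OF assms(1)], of a] assms(2) by simp
  moreover have "(\<Prod>n. 1 - a * v ^ Suc n) = qpoch_inf v (a * v)"
    unfolding qpoch_inf_def by (simp add: mult_ac)
  ultimately have "qpoch_inf v (a * v) = qpoch_inf v a / (1 - a)" by simp
  moreover have "1 - a \<noteq> 0" using assms(2) by simp
  ultimately show ?thesis by simp
qed

lemma norm_lt1_pow:
  fixes v x :: complex
  assumes "norm v < 1" "norm x < 1"
  shows "norm (x * v ^ i) < 1"
proof -
  have "norm (x * v ^ i) = norm x * norm v ^ i" by (simp add: norm_mult norm_power)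
  also have "\<dots> \<le> norm x * 1"
    using assms by (intro mult_left_mono power_le_one) auto
  finally show ?thesis using assms by simp
qed

definition qc :: "complex \<Rightarrow> complex \<Rightarrow> nat \<Rightarrow> complex" where
  "qc v a j = (\<Prod>k<j. (1 - a * v ^ k) / (1 - v ^ Suc k))"

lemma qc_Suc: "qc v a (Suc j) = qc v a j * ((1 - a * v ^ j) / (1 - v ^ Suc j))"
  by (simp add: qc_def)

lemma qc_bounded:
  fixes v a :: complex
  assumes v: "norm v < 1"
  obtains B where "B > 0" "\<And>j. norm (qc v a j) \<le> B"
proof -
  have nz: "1 - v ^ Suc k \<noteq> 0" for k
    using norm_lt1_pow[OF v v, of k] by (auto simp: mult_ac)
  have l1: "(\<lambda>n. \<Prod>i<n. 1 - a * v ^ i) \<longlonglongrightarrow> qpoch_inf v a" by (rule qp_lim[OF v])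
  have l2: "(\<lambda>n. \<Prod>i<n. 1 - v * v ^ i) \<longlonglongrightarrow> qpoch_inf v v" by (rule qp_lim[OF v])
  have nz2: "qpoch_inf v v \<noteq> 0"
    using norm_lt1_pow[OF v v] by (intro qp_nz[OF v]) (metis norm_one less_irrefl)
  have "(\<lambda>n. (\<Prod>i<n. 1 - a * v ^ i) / (\<Prod>i<n. 1 - v * v ^ i)) \<longlonglongrightarrow> qpoch_inf v a / qpoch_inf v v"
    by (intro tendsto_divide l1 l2 nz2)
  moreover have "(\<Prod>i<n. 1 - a * v ^ i) / (\<Prod>i<n. 1 - v * v ^ i) = qc v a n" for n
    unfolding qc_def by (simp add: prod_dividef)
  ultimately have "convergent (qc v a)" by (auto simp: convergent_def)
  then have "Bseq (qc v a)" by (rule convergent_imp_Bseq)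
  then show ?thesis using that by (auto elim: BseqE)
qed

lemma qc_summable:
  fixes v a s :: complex
  assumes v: "norm v < 1" and s: "norm s < 1"
  shows "summable (\<lambda>j. qc v a j * s ^ j)"
proof -
  obtain B where B: "B > 0" "\<And>j. norm (qc v a j) \<le> B" using qc_bounded[OF v] by blast
  show ?thesis
  proof (rule summable_comparison_test')
    show "summable (\<lambda>j. B * norm s ^ j)" using s by (intro summable_mult summable_geometric) simp
    show "norm (qc v a j * s ^ j) \<le> B * norm s ^ j" for j
      using B by (simp add: norm_mult norm_power mult_right_mono)
  qed
qed

lemma sums_shift_right:
  fixes e :: "nat \<Rightarrow> complex"
  assumes "e sums E"
  shows "(\<lambda>j. if j = 0 then 0 else e (j - 1)) sums E"
  using sums_Suc_iff[of "\<lambda>j. if j = 0 then 0 else e (j - 1)" E] assms by simp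

lemma qc_funeq:
  fixes v a s :: complex
  assumes v: "norm v < 1" and s: "norm s < 1"
  shows "(1 - s) * (\<Sum>j. qc v a j * s ^ j) = (1 - a * s) * (\<Sum>j. qc v a j * (v * s) ^ j)"
proof -
  define F where "F = (\<Sum>j. qc v a j * s ^ j)"
  define G where "G = (\<Sum>j. qc v a j * (v * s) ^ j)"
  have vs: "norm (v * s) < 1" using norm_lt1_pow[OF v s, of 1] by (simp add: mult_ac)
  have A1: "(\<lambda>j. qc v a j * s ^ j) sums F"
    unfolding F_def using qc_summable[OF v s] by (simp add: summable_sums)
  have B1: "(\<lambda>j. qc v a j * (v * s) ^ j) sums G"
    unfolding G_def using qc_summable[OF v vs] by (simp add: summable_sums)
  have A2: "(\<lambda>j. if j = 0 then 0 else s * (qc v a (j - 1) * s ^ (j - 1))) sums (s * F)"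
    using sums_shift_right[OF sums_mult[OF A1, of s]] by simp
  have B2: "(\<lambda>j. if j = 0 then 0 else (a * s) * (qc v a (j - 1) * (v * s) ^ (j - 1))) sums ((a * s) * G)"
    using sums_shift_right[OF sums_mult[OF B1, of "a * s"]] by simp
  have L: "(\<lambda>j. qc v a j * s ^ j - (if j = 0 then 0 else s * (qc v a (j - 1) * s ^ (j - 1)))) sums (F - s * F)"
    by (rule sums_diff[OF A1 A2])
  have R: "(\<lambda>j. qc v a j * (v * s) ^ j - (if j = 0 then 0 else (a * s) * (qc v a (j - 1) * (v * s) ^ (j - 1)))) sums (G - (a * s) * G)"
    by (rule sums_diff[OF B1 B2])
  have eq: "qc v a j * s ^ j - (if j = 0 then 0 else s * (qc v a (j - 1) * s ^ (j - 1)))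
      = qc v a j * (v * s) ^ j - (if j = 0 then 0 else (a * s) * (qc v a (j - 1) * (v * s) ^ (j - 1)))" for j
  proof (cases j)
    case 0
    then show ?thesis by simp
  next
    case (Suc i)
    have nz: "1 - v ^ Suc i \<noteq> 0"
      using norm_lt1_pow[OF v v, of i] by (auto simp: mult_ac)
    show ?thesis using nz unfolding Suc
      by (simp add: qc_Suc field_simps power_mult_distrib)
  qed
  have "F - s * F = G - (a * s) * G"
    using L R unfolding eq by (rule sums_unique2)
  then show ?thesis unfolding F_def G_def by (simp add: algebra_simps)
qed

lemma qbinom:
  fixes v a t :: complex
  assumes v: "norm v < 1" and t: "norm t < 1"
  shows "(\<lambda>j. qc v a j * t ^ j) sums (qpoch_inf v (a * t) / qpoch_inf v t)"
proof -
  define f where "f s = (\<Sum>j. qc v a j * s ^ j)" for s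
  have vn: "norm (v ^ n * t) < 1" for n using norm_lt1_pow[OF v t, of n] by (simp add: mult_ac)
  have iter: "f t = (\<Prod>i<n. (1 - a * t * v ^ i) / (1 - t * v ^ i)) * f (v ^ n * t)" for n
  proof (induction n)
    case 0
    then show ?case by simp
  next
    case (Suc n)
    have nz: "1 - v ^ n * t \<noteq> 0" using vn[of n] by auto
    have "(1 - v ^ n * t) * f (v ^ n * t) = (1 - a * (v ^ n * t)) * f (v * (v ^ n * t))"
      unfolding f_def by (rule qc_funeq[OF v vn])
    then have "f (v ^ n * t) = (1 - a * (v ^ n * t)) / (1 - v ^ n * t) * f (v ^ Suc n * t)"
      using nz by (simp add: field_simps)
    then show ?case using Suc by (simp add: mult_ac)
  qed
  have cont: "isCont f 0"
  proof -
    have "summable (\<lambda>j. qc v a j * (1/2) ^ j)" by (rule qc_summable[OF v]) simp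
    then show ?thesis unfolding f_def by (rule isCont_powser) simp
  qed
  have "(\<lambda>n. v ^ n * t) \<longlonglongrightarrow> 0 * t"
    by (intro tendsto_mult LIMSEQ_power_zero v tendsto_const)
  then have "(\<lambda>n. f (v ^ n * t)) \<longlonglongrightarrow> f 0"
    using isCont_tendsto_compose[OF cont, of "\<lambda>n. v ^ n * t" sequentially] by simp
  moreover have "f 0 = 1" unfolding f_def by (simp add: qc_def)
  ultimately have lf: "(\<lambda>n. f (v ^ n * t)) \<longlonglongrightarrow> 1" by simp
  have nzt: "qpoch_inf v t \<noteq> 0"
    using norm_lt1_pow[OF v t] by (intro qp_nz[OF v]) (metis norm_one less_irrefl)
  have "(\<lambda>n. (\<Prod>i<n. 1 - (a * t) * v ^ i) / (\<Prod>i<n. 1 - t * v ^ i)) \<longlonglongrightarrow> qpoch_inf v (a * t) / qpoch_inf v t"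
    by (intro tendsto_divide qp_lim v nzt)
  then have "(\<lambda>n. (\<Prod>i<n. (1 - a * t * v ^ i) / (1 - t * v ^ i)) * f (v ^ n * t))
     \<longlonglongrightarrow> qpoch_inf v (a * t) / qpoch_inf v t * 1"
    using lf by (intro tendsto_mult) (simp_all add: prod_dividef)
  then have "(\<lambda>n. f t) \<longlonglongrightarrow> qpoch_inf v (a * t) / qpoch_inf v t"
    using iter by simp
  then have "f t = qpoch_inf v (a * t) / qpoch_inf v t" by (rule LIMSEQ_const_iff[THEN iffD1])
  moreover have "(\<lambda>j. qc v a j * t ^ j) sums f t"
    unfolding f_def using qc_summable[OF v t] by (simp add: summable_sums)
  ultimately show ?thesis by simp
qed


lemma has_sum_finsum:
  fixes f :: "nat \<Rightarrow> 'a \<Rightarrow> complex"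
  assumes "finite I" "\<And>j. j \<in> I \<Longrightarrow> (f j has_sum s j) A"
  shows "((\<lambda>x. \<Sum>j\<in>I. f j x) has_sum (\<Sum>j\<in>I. s j)) A"
  using assms
proof (induction I rule: finite_induct)
  case empty
  then show ?case by (simp add: has_sum_0)
next
  case (insert i I)
  then have "((\<lambda>x. f i x + (\<Sum>j\<in>I. f j x)) has_sum (s i + (\<Sum>j\<in>I. s j))) A"
    by (intro has_sum_add) auto
  then show ?case using insert by simp
qed

lemma has_sum_incr_limit:
  fixes f :: "'a \<Rightarrow> complex"
  assumes sm: "f summable_on A" and sub: "\<And>N. B N \<subseteq> A" and mono: "\<And>N. B N \<subseteq> B (Suc N)"
    and cover: "\<And>x. x \<in> A \<Longrightarrow> \<exists>N. x \<in> B N"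
    and hs: "\<And>N. (f has_sum s N) (B N)" and lim: "s \<longlonglongrightarrow> Y"
  shows "(f has_sum Y) A"
proof -
  define T where "T = infsum f A"
  define g where "g x = norm (f x)" for x
  have absA: "g summable_on A" using sm summable_on_iff_abs_summable_on_complex unfolding g_def by blast
  have monoB: "B m \<subseteq> B n" if "m \<le> n" for m n
    using lift_Suc_mono_le[of B, OF mono that] .
  have fin_cover: "finite F \<Longrightarrow> F \<subseteq> A \<Longrightarrow> \<exists>N. F \<subseteq> B N" for F
  proof (induction F rule: finite_induct)
    case empty
    then show ?case by simp
  next
    case (insert x F)
    then obtain N1 where N1: "F \<subseteq> B N1" by auto
    obtain N2 where N2: "x \<in> B N2" using cover[of x] insert.prems by blast
    have "insert x F \<subseteq> B (max N1 N2)"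
      using N1 N2 monoB[of N1 "max N1 N2"] monoB[of N2 "max N1 N2"] by auto
    then show ?case by blast
  qed
  have "s \<longlonglongrightarrow> T"
  proof (rule LIMSEQ_I)
    fix r :: real assume r: "0 < r"
    obtain F where F: "finite F" "F \<subseteq> A" and Fr: "dist (sum g F) (infsum g A) \<le> r / 2"
      using infsum_finite_approximation[OF absA, of "r / 2"] r by auto
    obtain N0 where N0: "F \<subseteq> B N0" using fin_cover[OF F] by blast
    show "\<exists>no. \<forall>n\<ge>no. norm (s n - T) < r"
    proof (intro exI allI impI)
      fix n assume n: "N0 \<le> n"
      have FB: "F \<subseteq> B n" using N0 monoB[OF n] by auto
      have hA: "(f has_sum T) A" unfolding T_def using sm by (rule has_sum_infsum)
      have hD: "(f has_sum (T - s n)) (A - B n)" by (rule has_sum_Diff[OF hA hs sub])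
      have absD: "g summable_on (A - B n)" using absA by (rule summable_on_subset_banach) auto
      have absB: "g summable_on B n" using absA sub by (rule summable_on_subset_banach)
      have "norm (T - s n) = norm (infsum f (A - B n))" using hD by (simp add: infsumI)
      also have "\<dots> \<le> infsum g (A - B n)"
        using absD unfolding g_def by (rule norm_infsum_bound)
      also have "\<dots> = infsum g A - infsum g (B n)"
        by (rule infsumI, rule has_sum_Diff[OF has_sum_infsum[OF absA] has_sum_infsum[OF absB] sub])
      also have "sum g F \<le> infsum g (B n)"
        using infsum_mono2[of g F "B n"] FB F absB by (simp add: g_def)
      then have "infsum g A - infsum g (B n) \<le> infsum g A - sum g F" by simp
      also have "\<dots> \<le> r / 2" using Fr unfolding dist_real_def abs_le_iff by linarith
      finally have "norm (T - s n) \<le> r / 2" by simp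
      then show "norm (s n - T) < r" using r by (simp add: norm_minus_commute)
    qed
  qed
  then have "Y = T" using lim LIMSEQ_unique by blast
  then show ?thesis unfolding T_def using sm by (simp add: has_sum_infsum)
qed

lemma W_sums:
  fixes q t :: complex
  assumes t: "norm t < 1" and len: "length xs \<le> N"
  shows "(\<lambda>j. t ^ j * q ^ part xs (Suc j)) sums ((\<Sum>j<N. t ^ j * q ^ part xs (Suc j)) + t ^ N / (1 - t))"
proof -
  have eq: "(\<lambda>i. t ^ (i + N) * q ^ part xs (Suc (i + N))) = (\<lambda>i. t ^ N * t ^ i)"
    using len by (intro ext) (simp add: part_zero power_add mult_ac)
  have "(\<lambda>i. t ^ N * t ^ i) sums (t ^ N * (1 / (1 - t)))"
    by (intro sums_mult geometric_sums t)
  then have "(\<lambda>i. t ^ (i + N) * q ^ part xs (Suc (i + N))) sums (t ^ N / (1 - t))"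
    unfolding eq by simp
  then show ?thesis by (subst (asm) sums_iff_shift) (simp add: add.commute)
qed

definition EE :: "complex \<Rightarrow> complex \<Rightarrow> nat \<Rightarrow> nat \<Rightarrow> complex" where
  "EE v q N j = (\<Prod>k<N. 1 / (1 - v ^ Suc k * (if j \<le> k then q else 1)))"

lemma norm_factor_lt1:
  fixes v q :: complex
  assumes v: "norm v < 1" and qv: "norm (q * v) < 1"
  shows "norm (v ^ Suc k * (if j \<le> k then q else 1)) < 1"
proof (cases "j \<le> k")
  case True
  have "norm (v ^ Suc k * q) = norm (q * v) * norm v ^ k" by (simp add: norm_mult norm_power mult_ac)
  also have "\<dots> \<le> norm (q * v) * 1" using v by (intro mult_left_mono power_le_one) auto
  finally show ?thesis using True qv by simp
next
  case False
  have "norm (v ^ Suc k) = norm v * norm v ^ k" by (simp add: norm_mult norm_power)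
  also have "\<dots> \<le> norm v * 1" using v by (intro mult_left_mono power_le_one) auto
  finally show ?thesis using False v by simp
qed

lemma PN_main_has_sum:
  fixes q t v :: complex
  assumes v: "norm v < 1" and t: "norm t < 1" and qv: "norm (q * v) < 1"
  shows "((\<lambda>xs. v ^ sum_list xs * Bhat q t xs) has_sum
          (1 / (1 - q) * ((\<Sum>j<N. t ^ j * EE v q N j) + t ^ N / (1 - t) * EE v q N N))) (PN N)"
proof -
  have hj: "((\<lambda>xs. v ^ sum_list xs * q ^ part xs (Suc j)) has_sum EE v q N j) (PN N)" for j
    unfolding EE_def by (rule PN_has_sum_w) (rule norm_factor_lt1[OF v qv])
  have "((\<lambda>xs. (\<Sum>j<N. t ^ j * (v ^ sum_list xs * q ^ part xs (Suc j))) +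
                t ^ N / (1 - t) * (v ^ sum_list xs * q ^ part xs (Suc N))) has_sum
         ((\<Sum>j<N. t ^ j * EE v q N j) + t ^ N / (1 - t) * EE v q N N)) (PN N)"
    by (intro has_sum_add has_sum_finsum has_sum_cmult_right hj) auto
  then have hs': "((\<lambda>xs. 1 / (1 - q) * ((\<Sum>j<N. t ^ j * (v ^ sum_list xs * q ^ part xs (Suc j))) +
                t ^ N / (1 - t) * (v ^ sum_list xs * q ^ part xs (Suc N)))) has_sum
         (1 / (1 - q) * ((\<Sum>j<N. t ^ j * EE v q N j) + t ^ N / (1 - t) * EE v q N N))) (PN N)"
    by (rule has_sum_cmult_right)
  have eq: "v ^ sum_list xs * Bhat q t xs =
      1 / (1 - q) * ((\<Sum>j<N. t ^ j * (v ^ sum_list xs * q ^ part xs (Suc j))) +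
                t ^ N / (1 - t) * (v ^ sum_list xs * q ^ part xs (Suc N)))" if xs: "xs \<in> PN N" for xs
  proof -
    have len: "length xs \<le> N" using xs by (simp add: PN_def)
    have "(\<Sum>j. t ^ j * q ^ part xs (Suc j)) = (\<Sum>j<N. t ^ j * q ^ part xs (Suc j)) + t ^ N / (1 - t)"
      using W_sums[OF t len] by (rule sums_unique[symmetric])
    moreover have "part xs (Suc N) = 0" using len by (simp add: part_zero)
    ultimately show ?thesis
      unfolding Bhat_def by (simp add: algebra_simps sum_distrib_left sum_distrib_right)
  qed
  show ?thesis
    by (rule has_sum_cong[THEN iffD2, OF eq hs'])
qed

lemma EE_eq:
  fixes q v :: complex
  assumes nz1: "\<And>k. 1 - v ^ Suc k \<noteq> 0" and nz2: "\<And>k. 1 - q * v * v ^ k \<noteq> 0" and jN: "j \<le> N"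
  shows "EE v q N j = qc v (q * v) j / (\<Prod>k<N. 1 - q * v * v ^ k)"
proof -
  define D1 where "D1 = (\<Prod>k<j. 1 - v ^ Suc k)"
  define P1 where "P1 = (\<Prod>k<j. 1 - q * v * v ^ k)"
  define P2 where "P2 = (\<Prod>k\<in>{j..<N}. 1 - q * v * v ^ k)"
  have D1nz: "D1 \<noteq> 0" unfolding D1_def using nz1 by (simp add: prod_zero_iff)
  have P1nz: "P1 \<noteq> 0" unfolding P1_def using nz2 by (simp add: prod_zero_iff)
  have P2nz: "P2 \<noteq> 0" unfolding P2_def using nz2 by (simp add: prod_zero_iff)
  have split: "(\<Prod>k<N. h k) = (\<Prod>k<j. h k) * (\<Prod>k\<in>{j..<N}. h k)" for h :: "nat \<Rightarrow> complex"
    using prod.atLeastLessThan_concat[of 0 j N h] jN by (simp add: lessThan_atLeast0)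
  have "EE v q N j = (\<Prod>k<j. 1 / (1 - v ^ Suc k)) * (\<Prod>k\<in>{j..<N}. 1 / (1 - q * v * v ^ k))"
    unfolding EE_def split
    by (intro arg_cong2[where f = "(*)"] prod.cong) (auto simp: mult_ac)
  also have "\<dots> = 1 / D1 * (1 / P2)"
    unfolding D1_def P2_def by (simp add: prod_dividef)
  also have "qc v (q * v) j = P1 / D1"
    unfolding qc_def P1_def D1_def by (simp add: prod_dividef)
  moreover have "(\<Prod>k<N. 1 - q * v * v ^ k) = P1 * P2"
    unfolding P1_def P2_def split ..
  moreover have "P1 / D1 / (P1 * P2) = 1 / D1 * (1 / P2)"
    using D1nz P1nz P2nz by (simp add: field_simps)
  ultimately show ?thesis by simp
qed

lemma prod_bound:
  fixes a r :: real
  assumes a: "0 \<le> a" "a < 1" and r: "0 \<le> r" "r < 1"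
  shows "(\<Prod>k<N. 1 / (1 - a ^ k * r)) \<le> exp (r / ((1 - a) * (1 - r)))"
proof -
  have ak: "a ^ k \<le> 1" "0 \<le> a ^ k" for k using a by (auto intro: power_le_one)
  have akr: "a ^ k * r \<le> r" "0 \<le> a ^ k * r" for k
    using ak[of k] r by (auto intro: mult_left_le_one_le)
  have "(\<Prod>k<N. 1 / (1 - a ^ k * r)) \<le> (\<Prod>k<N. 1 + a ^ k * r / (1 - r))"
  proof (intro prod_mono conjI)
    fix k
    have pos: "0 < 1 - a ^ k * r" using akr[of k] r by simp
    show "0 \<le> 1 / (1 - a ^ k * r)" using pos by simp
    have "1 / (1 - a ^ k * r) = 1 + a ^ k * r / (1 - a ^ k * r)" using pos by (simp add: field_simps)
    also have "\<dots> \<le> 1 + a ^ k * r / (1 - r)"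
      using akr[of k] r pos by (intro add_left_mono divide_left_mono) auto
    finally show "1 / (1 - a ^ k * r) \<le> 1 + a ^ k * r / (1 - r)" .
  qed
  also have "\<dots> \<le> exp (\<Sum>k<N. a ^ k * r / (1 - r))"
    using akr r by (intro prod_le_exp_sum) auto
  also have "(\<Sum>k<N. a ^ k * r / (1 - r)) = (\<Sum>k<N. a ^ k) * (r / (1 - r))"
    unfolding sum_distrib_right by (intro sum.cong) auto
  also have "\<dots> \<le> (1 / (1 - a)) * (r / (1 - r))"
  proof (rule mult_right_mono)
    have "(\<Sum>k<N. a ^ k) \<le> (\<Sum>k. a ^ k)"
      using a by (intro sum_le_suminf summable_geometric) auto
    also have "\<dots> = 1 / (1 - a)" using a by (subst suminf_geometric) auto
    finally show "(\<Sum>k<N. a ^ k) \<le> 1 / (1 - a)" .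
    show "0 \<le> r / (1 - r)" using r by simp
  qed
  finally show ?thesis by simp
qed

lemma f_bound:
  fixes q t v :: complex
  assumes xs: "xs \<in> PP" and t: "norm t < 1"
  shows "norm (v ^ sum_list xs * Bhat q t xs)
     \<le> 1 / (norm (1 - q) * (1 - norm t)) * (norm v ^ sum_list xs * max 1 (norm q) ^ part xs 1)"
proof -
  define Q where "Q = max 1 (norm q)"
  define g where "g = (\<lambda>j. t ^ j * q ^ part xs (Suc j))"
  have Q1: "1 \<le> Q" unfolding Q_def by simp
  have gb: "norm (g j) \<le> Q ^ part xs 1 * norm t ^ j" for j
  proof -
    have "norm (g j) = norm t ^ j * norm q ^ part xs (Suc j)" by (simp add: g_def norm_mult norm_power)
    also have "\<dots> \<le> norm t ^ j * Q ^ part xs (Suc j)"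
      by (intro mult_left_mono power_mono) (auto simp: Q_def)
    also have "\<dots> \<le> norm t ^ j * Q ^ part xs 1"
      using part_mono[OF xs, of 1 "Suc j"] Q1 by (intro mult_left_mono power_increasing) auto
    finally show ?thesis by (simp add: mult_ac)
  qed
  have sg: "summable (\<lambda>j. Q ^ part xs 1 * norm t ^ j)"
    using t by (intro summable_mult summable_geometric) simp
  have sng: "summable (\<lambda>j. norm (g j))"
    by (rule summable_comparison_test'[OF sg]) (use gb in simp)
  have "norm (suminf g) \<le> (\<Sum>j. norm (g j))" by (rule summable_norm[OF sng])
  also have "\<dots> \<le> (\<Sum>j. Q ^ part xs 1 * norm t ^ j)" by (rule suminf_le[OF gb sng sg])
  also have "\<dots> = Q ^ part xs 1 * (1 / (1 - norm t))"
    using t by (subst suminf_mult) (simp_all add: suminf_geometric)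
  finally have sb: "norm (suminf g) \<le> Q ^ part xs 1 / (1 - norm t)" by simp
  have "norm (v ^ sum_list xs * Bhat q t xs) = norm v ^ sum_list xs * (norm (suminf g) / norm (1 - q))"
    by (simp add: Bhat_def g_def norm_mult norm_power norm_divide)
  also have "\<dots> \<le> norm v ^ sum_list xs * (Q ^ part xs 1 / (1 - norm t) / norm (1 - q))"
    using sb by (intro mult_left_mono divide_right_mono) auto
  also have "\<dots> = 1 / (norm (1 - q) * (1 - norm t)) * (norm v ^ sum_list xs * Q ^ part xs 1)"
    by (simp add: field_simps)
  finally show ?thesis unfolding Q_def .
qed

lemma PP_summable:
  fixes q t v :: complex
  assumes v: "norm v < 1" and t: "norm t < 1" and qv: "norm (q * v) < 1"
  shows "(\<lambda>xs. v ^ sum_list xs * Bhat q t xs) summable_on PP"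
proof -
  define Q where "Q = max 1 (norm q)"
  define K where "K = 1 / (norm (1 - q) * (1 - norm t))"
  define \<rho> where "\<rho> = norm v * Q"
  have K0: "0 \<le> K" unfolding K_def using t by simp
  have \<rho>0: "0 \<le> \<rho>" unfolding \<rho>_def Q_def by simp
  have \<rho>1: "\<rho> < 1" unfolding \<rho>_def Q_def using v qv by (auto simp: max_def norm_mult mult_ac)
  have "(\<lambda>xs. norm (v ^ sum_list xs * Bhat q t xs)) summable_on PP"
  proof (rule nonneg_bdd_above_summable_on)
    show "bdd_above (sum (\<lambda>xs. norm (v ^ sum_list xs * Bhat q t xs)) ` {F. F \<subseteq> PP \<and> finite F})"
    proof (rule bdd_aboveI2)
      fix F assume F: "F \<in> {F. F \<subseteq> PP \<and> finite F}"
      define N where "N = (\<Sum>xs\<in>F. length xs)"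
      have FN: "F \<subseteq> PN N"
      proof
        fix xs assume "xs \<in> F"
        then have "length xs \<le> N" unfolding N_def using F by (intro member_le_sum) auto
        then show "xs \<in> PN N" using F \<open>xs \<in> F\<close> by (auto simp: PN_def)
      qed
      have hs: "((\<lambda>xs. norm v ^ sum_list xs * Q ^ part xs (Suc 0)) has_sum
               (\<Prod>k<N. 1 / (1 - norm v ^ Suc k * (if 0 \<le> k then Q else 1)))) (PN N)"
      proof (rule PN_has_sum_w)
        fix k
        have "norm (norm v ^ Suc k * Q) = norm v ^ k * \<rho>"
          unfolding \<rho>_def Q_def by (simp add: abs_mult mult_ac)
        also have "\<dots> \<le> 1 * \<rho>" using v \<rho>0 by (intro mult_right_mono power_le_one) auto
        finally show "norm (norm v ^ Suc k * (if 0 \<le> k then Q else 1)) < 1" using \<rho>1 by simp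
      qed
      have "(\<Sum>xs\<in>F. norm (v ^ sum_list xs * Bhat q t xs)) \<le> (\<Sum>xs\<in>F. K * (norm v ^ sum_list xs * Q ^ part xs (Suc 0)))"
        using F f_bound[OF _ t] by (intro sum_mono) (auto simp: K_def Q_def)
      also have "\<dots> = K * (\<Sum>xs\<in>F. norm v ^ sum_list xs * Q ^ part xs (Suc 0))"
        by (simp add: sum_distrib_left)
      also have "(\<Sum>xs\<in>F. norm v ^ sum_list xs * Q ^ part xs (Suc 0))
           \<le> (\<Prod>k<N. 1 / (1 - norm v ^ Suc k * (if 0 \<le> k then Q else 1)))"
        using F FN by (intro finite_sum_le_has_sum[OF hs]) (auto simp: Q_def)
      also have "(\<Prod>k<N. 1 / (1 - norm v ^ Suc k * (if 0 \<le> k then Q else 1))) = (\<Prod>k<N. 1 / (1 - norm v ^ k * \<rho>))"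
        unfolding \<rho>_def by (simp add: mult_ac)
      also have "\<dots> \<le> exp (\<rho> / ((1 - norm v) * (1 - \<rho>)))"
        by (rule prod_bound) (use v \<rho>0 \<rho>1 in auto)
      finally show "(\<Sum>xs\<in>F. norm (v ^ sum_list xs * Bhat q t xs)) \<le> K * exp (\<rho> / ((1 - norm v) * (1 - \<rho>)))"
        using K0 by (simp add: mult_left_mono)
    qed
  qed simp
  then show ?thesis using summable_on_iff_abs_summable_on_complex by blast
qed

lemma length_le_sum_list: "0 \<notin> set xs \<Longrightarrow> length xs \<le> sum_list (xs :: nat list)"
  by (induction xs) auto

lemma finite_partitions: "finite (partitions m)"
proof (rule finite_subset)
  show "partitions m \<subseteq> {xs. set xs \<subseteq> {..m} \<and> length xs \<le> m}"
    by (auto simp: partitions_def length_le_sum_list member_le_sum_list)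
  show "finite {xs. set xs \<subseteq> {..m} \<and> length xs \<le> m}"
    by (rule finite_lists_length_le) simp
qed

theorem theorem3p2:
  fixes q t v :: complex
  assumes "norm v < 1" and "norm t < 1" and "norm (q * v) < 1" and "q \<noteq> 1"
  shows "(\<lambda>m. v ^ m * trace_B q t m) sums
           (qpoch_inf v (v * q * t) / (qpoch_inf v q * qpoch_inf v t))"
proof -
  note v = assms(1) and t = assms(2) and qv = assms(3) and q1 = assms(4)
  define f where "f xs = v ^ sum_list xs * Bhat q t xs" for xs
  define a where "a = q * v"
  define PiN where "PiN N = (\<Prod>k<N. 1 - a * v ^ k)" for N
  define S where "S = qpoch_inf v (a * t) / qpoch_inf v t"
  define sN where "sN N = 1 / (1 - q) * ((\<Sum>j<N. t ^ j * EE v q N j) + t ^ N / (1 - t) * EE v q N N)" for N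
  define Y where "Y = 1 / (1 - q) * (S / qpoch_inf v a)"
  have nz1: "1 - v ^ Suc k \<noteq> 0" for k
    using norm_lt1_pow[OF v v, of k] by (auto simp: mult_ac)
  have nz2: "1 - q * v * v ^ k \<noteq> 0" for k
    using norm_lt1_pow[OF v qv, of k] by auto
  have t1: "1 - t \<noteq> 0" using t by auto
  have q1': "1 - q \<noteq> 0" using q1 by simp
  have sN_eq: "sN N = 1 / (1 - q) * (((\<Sum>j<N. qc v a j * t ^ j) + t ^ N * qc v a N / (1 - t)) / PiN N)" for N
  proof -
    have e1: "(\<Sum>j<N. t ^ j * EE v q N j) = (\<Sum>j<N. qc v a j * t ^ j) / PiN N"
      unfolding sum_divide_distrib a_def PiN_def
      by (intro sum.cong refl) (simp add: EE_eq[OF nz1 nz2] mult_ac)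
    have e2: "EE v q N N = qc v a N / PiN N"
      unfolding a_def PiN_def by (rule EE_eq[OF nz1 nz2]) simp
    have e3: "((\<Sum>j<N. qc v a j * t ^ j) + t ^ N * qc v a N / (1 - t)) / PiN N
        = (\<Sum>j<N. qc v a j * t ^ j) / PiN N + t ^ N / (1 - t) * (qc v a N / PiN N)"
      by (simp add: add_divide_distrib)
    show ?thesis unfolding sN_def e1 e2 e3 ..
  qed
  have qs: "(\<lambda>j. qc v a j * t ^ j) sums S" unfolding S_def by (rule qbinom[OF v t])
  have l1: "(\<lambda>N. \<Sum>j<N. qc v a j * t ^ j) \<longlonglongrightarrow> S" using qs by (simp add: sums_def)
  have l2: "(\<lambda>N. t ^ N * qc v a N / (1 - t)) \<longlonglongrightarrow> 0 / (1 - t)"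
  proof -
    have "(\<lambda>N. qc v a N * t ^ N) \<longlonglongrightarrow> 0"
      using qs by (intro summable_LIMSEQ_zero) (auto simp: sums_iff)
    moreover have "t \<noteq> 1" using t by auto
    ultimately show ?thesis by (intro tendsto_divide) (simp_all add: mult_ac)
  qed
  have l3: "PiN \<longlonglongrightarrow> qpoch_inf v a" unfolding PiN_def by (rule qp_lim[OF v])
  have nza: "qpoch_inf v a \<noteq> 0"
    using norm_lt1_pow[OF v qv] unfolding a_def by (intro qp_nz[OF v]) (metis norm_one less_irrefl)
  have "sN \<longlonglongrightarrow> 1 / (1 - q) * ((S + 0 / (1 - t)) / qpoch_inf v a)"
    unfolding sN_eq by (intro tendsto_intros l1 l2 l3 nza)
  then have lim: "sN \<longlonglongrightarrow> Y" unfolding Y_def by simp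
  have hsPP: "(f has_sum Y) PP"
  proof (rule has_sum_incr_limit[where B = PN and s = sN])
    show "f summable_on PP" unfolding f_def by (rule PP_summable[OF v t qv])
    show "PN N \<subseteq> PP" for N by (auto simp: PN_def)
    show "PN N \<subseteq> PN (Suc N)" for N by (auto simp: PN_def)
    show "\<exists>N. x \<in> PN N" if "x \<in> PP" for x using that by (auto simp: PN_def)
    show "(f has_sum sN N) (PN N)" for N
      unfolding f_def sN_def by (rule PN_main_has_sum[OF v t qv])
    show "sN \<longlonglongrightarrow> Y" by (rule lim)
  qed
  have hsSig: "((\<lambda>(m, xs). f xs) has_sum Y) (Sigma UNIV partitions)"
  proof -
    have "((\<lambda>p. f (snd p)) has_sum Y) (Sigma UNIV partitions) = (f has_sum Y) PP"
      by (rule has_sum_reindex_bij_witness[where j = snd and i = "\<lambda>xs. (sum_list xs, xs)"])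
         (auto simp: partitions_def PP_def)
    then show ?thesis using hsPP by (simp add: case_prod_unfold)
  qed
  have "((\<lambda>m. \<Sum>xs\<in>partitions m. f xs) has_sum Y) UNIV"
    by (rule has_sum_SigmaD[OF hsSig]) (auto intro: has_sum_finiteI finite_partitions)
  then have "(\<lambda>m. \<Sum>xs\<in>partitions m. f xs) sums Y" by (rule has_sum_imp_sums)
  moreover have "(\<Sum>xs\<in>partitions m. f xs) = v ^ m * trace_B q t m" for m
    unfolding trace_B_def f_def sum_distrib_left
    by (intro sum.cong refl) (simp add: partitions_def)
  moreover have "Y = qpoch_inf v (v * q * t) / (qpoch_inf v q * qpoch_inf v t)"
  proof -
    have hq: "qpoch_inf v q = (1 - q) * qpoch_inf v a"
      unfolding a_def by (rule qp_head[OF v q1])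
    have at: "a * t = v * q * t" unfolding a_def by (simp add: mult_ac)
    show ?thesis unfolding Y_def S_def hq at by (simp add: divide_divide_eq_left mult_ac)
  qed
  ultimately show ?thesis by simp
qed

end
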